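(* Let $\tau>0$ and $0\le\alpha<1$. There exist a constant $c>0$ and a non-increasing, strictly positive function $R:[0,\infty)\to(0,\infty)$, not depending on $n$, $f$ or $g$, such that for every $n$ and all $f,g\in\mathcal H^\alpha$ with $f(0)=g(0)=0$, $$\|\mathbb P^n_f-\mathbb P^n_g\|_{TV}\le c\,n^{1/2}\|f-g\|_\infty\quad\text{and}\quad 1-\tfrac12\|\mathbb P^n_f-\mathbb P^n_g\|_{TV}\ge R\big(n\|f-g\|_2^2+n^{1-\alpha}\|f-g\|_{\mathcal H^\alpha}^2\big).$$
   Context: For a continuous function $f$ on $[0,1]$, $\mathbb P^n_f$ is the law of $(Z^n_0,\dots,Z^n_n)$ with $Z^n_i=f(i/n)+\tau\xi^n_i$, $\xi^n_i$ i.i.d. standard Gaussian. $\|\mu\|_{TV}=\sup_{\|h\|_\infty\le1}|\int h\,d\mu|$ for a signed measure $\mu$. $\|f\|_2$ is the $L^2([0,1])$ norm. For $0\le\alpha<1$, $\|f\|_{\mathcal H^\alpha}=\|f\|_\infty+\sup_{s\ne t}|f(s)-f(t)|/|s-t|^\alpha$, and $\mathcal H^\alpha$ is the set of continuous $f$ on $[0,1]$ with $\|f\|_{\mathcal H^\alpha}<\infty$. *)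

theory Defs
  imports "HOL-Probability.Probability"
begin

text \<open>Law of (Z_0,...,Z_n), Z_i = f(i/n) + tau xi_i, xi_i iid standard Gaussian,
  as a product measure on functions indexed by {..n}.\<close>
definition obs_law :: "real \<Rightarrow> nat \<Rightarrow> (real \<Rightarrow> real) \<Rightarrow> (nat \<Rightarrow> real) measure" where
  "obs_law \<tau> n f = PiM {..n} (\<lambda>i. density lborel (normal_density (f (real i / real n)) \<tau>))"

definition tv_norm :: "'a measure \<Rightarrow> 'a measure \<Rightarrow> real" where
  "tv_norm M N = (SUP h \<in> {h. h \<in> borel_measurable M \<and> (\<forall>x\<in>space M. \<bar>h x\<bar> \<le> 1)}.
                    \<bar>(\<integral>x. h x \<partial>M) - (\<integral>x. h x \<partial>N)\<bar>)"

definition sup_norm :: "(real \<Rightarrow> real) \<Rightarrow> real" where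
  "sup_norm f = (SUP t \<in> {0..1}. \<bar>f t\<bar>)"

definition L2_norm01 :: "(real \<Rightarrow> real) \<Rightarrow> real" where
  "L2_norm01 f = sqrt (integral {0..1} (\<lambda>t. (f t)^2))"

definition holder_quot :: "real \<Rightarrow> (real \<Rightarrow> real) \<Rightarrow> real set" where
  "holder_quot \<alpha> f = {\<bar>f s - f t\<bar> / \<bar>s - t\<bar> powr \<alpha> | s t. s \<in> {0..1} \<and> t \<in> {0..1} \<and> s \<noteq> t}"

definition holder_norm :: "real \<Rightarrow> (real \<Rightarrow> real) \<Rightarrow> real" where
  "holder_norm \<alpha> f = sup_norm f + Sup (holder_quot \<alpha> f)"

definition holder_space :: "real \<Rightarrow> (real \<Rightarrow> real) set" where
  "holder_space \<alpha> = {f. continuous_on {0..1} f \<and> bdd_above (holder_quot \<alpha> f)}"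

end

theory Submission
  imports Defs
begin

lemma PiM_density_eq:
  fixes \<phi> :: "nat \<Rightarrow> real \<Rightarrow> real" and I :: "nat set"
  assumes fin: "finite I"
    and meas[measurable]: "\<And>i. \<phi> i \<in> borel_measurable borel"
    and nn: "\<And>i x. 0 \<le> \<phi> i x"
    and ps: "\<And>i. prob_space (density lborel (\<phi> i))"
  shows "PiM I (\<lambda>i. density lborel (\<phi> i)) = density (PiM I (\<lambda>_. lborel)) (\<lambda>x. ennreal (\<Prod>i\<in>I. \<phi> i (x i)))"
proof -
  interpret P: product_sigma_finite "\<lambda>i. density lborel (\<phi> i)"
    unfolding product_sigma_finite_def using ps prob_space_imp_sigma_finite by blast
  interpret L: product_sigma_finite "\<lambda>_. lborel :: real measure"
    unfolding product_sigma_finite_def by (simp add: lborel.sigma_finite_measure_axioms)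
  have mP[measurable]: "(\<lambda>x. \<Prod>i\<in>I. \<phi> i (x i)) \<in> borel_measurable (PiM I (\<lambda>_. lborel))"
    by measurable
  show ?thesis
  proof (rule P.PiM_eqI[symmetric, OF fin])
    show "sets (density (PiM I (\<lambda>_. lborel)) (\<lambda>x. ennreal (\<Prod>i\<in>I. \<phi> i (x i)))) = sets (PiM I (\<lambda>i. density lborel (\<phi> i)))"
      by (auto intro!: sets_PiM_cong)
  next
    fix A assume A: "\<And>i. i \<in> I \<Longrightarrow> A i \<in> sets (density lborel (\<phi> i))"
    then have A': "\<And>i. i \<in> I \<Longrightarrow> A i \<in> sets borel" by auto
    have PiE: "Pi\<^sub>E I A \<in> sets (PiM I (\<lambda>_. lborel))"
      using A' by (intro sets_PiM_I_finite fin) auto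
    have "emeasure (density (PiM I (\<lambda>_. lborel)) (\<lambda>x. ennreal (\<Prod>i\<in>I. \<phi> i (x i)))) (Pi\<^sub>E I A)
       = (\<integral>\<^sup>+ x. ennreal (\<Prod>i\<in>I. \<phi> i (x i)) * indicator (Pi\<^sub>E I A) x \<partial>PiM I (\<lambda>_. lborel))"
      using PiE by (simp add: emeasure_density)
    also have "\<dots> = (\<integral>\<^sup>+ x. (\<Prod>i\<in>I. ennreal (\<phi> i (x i)) * indicator (A i) (x i)) \<partial>PiM I (\<lambda>_. lborel))"
    proof (rule nn_integral_cong)
      fix x assume x: "x \<in> space (PiM I (\<lambda>_. lborel :: real measure))"
      have "indicator (Pi\<^sub>E I A) x = (\<Prod>i\<in>I. indicator (A i) (x i) :: ennreal)"
        using x fin by (auto simp: space_PiM indicator_def PiE_def Pi_def prod_zero_iff)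
      then show "ennreal (\<Prod>i\<in>I. \<phi> i (x i)) * indicator (Pi\<^sub>E I A) x = (\<Prod>i\<in>I. ennreal (\<phi> i (x i)) * indicator (A i) (x i))"
        by (simp add: prod_ennreal nn prod.distrib)
    qed
    also have "\<dots> = (\<Prod>i\<in>I. \<integral>\<^sup>+ y. ennreal (\<phi> i y) * indicator (A i) y \<partial>lborel)"
      using A' by (intro L.product_nn_integral_prod fin) auto
    also have "\<dots> = (\<Prod>i\<in>I. emeasure (density lborel (\<phi> i)) (A i))"
      using A' by (intro prod.cong refl) (simp add: emeasure_density)
    finally show "emeasure (density (PiM I (\<lambda>_. lborel)) (\<lambda>x. ennreal (\<Prod>i\<in>I. \<phi> i (x i)))) (Pi\<^sub>E I A) = (\<Prod>i\<in>I. emeasure (density lborel (\<phi> i)) (A i))" .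
  qed
qed

lemma cs_aux:
  fixes X A C :: real
  assumes "0 \<le> X" "0 \<le> A" "0 < C" and H: "\<And>t. t > 0 \<Longrightarrow> X \<le> (t * A + C / t) / 2"
  shows "X \<le> sqrt (A * C)"
proof (cases "A = 0")
  case True
  show ?thesis
  proof (rule ccontr)
    assume "\<not> X \<le> sqrt (A * C)"
    then have X: "X > 0" using True by simp
    have "X \<le> (C / X * A + C / (C / X)) / 2" using H[of "C / X"] X assms by simp
    then have "X \<le> X / 2" using True X assms by simp
    then show False using X by simp
  qed
next
  case False
  then have A: "A > 0" using assms by simp
  define s where "s = sqrt (A * C)"
  have s: "s > 0" using A assms by (simp add: s_def)
  have ss: "s * s = A * C" using A assms by (simp add: s_def)
  have "X \<le> (s / A * A + C / (s / A)) / 2" using H[of "s / A"] s A by simp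
  also have "s / A * A = s" using A by simp
  also have "C / (s / A) = s" using A s ss by (simp add: field_simps)
  finally show ?thesis by (simp add: s_def)
qed

lemma tv_bound_abstract:
  fixes L :: "'a measure" and P Q h :: "'a \<Rightarrow> real"
  assumes Pm[measurable]: "P \<in> borel_measurable L" and Qm[measurable]: "Q \<in> borel_measurable L"
    and Pn: "\<And>x. 0 \<le> P x" and Qn: "\<And>x. 0 \<le> Q x"
    and Pi: "integrable L P" and Qi: "integrable L Q"
    and P1: "integral\<^sup>L L P = 1" and Q1: "integral\<^sup>L L Q = 1"
    and hm[measurable]: "h \<in> borel_measurable L" and hb: "\<And>x. x \<in> space L \<Longrightarrow> \<bar>h x\<bar> \<le> 1"
  shows "\<bar>(\<integral>x. P x * h x \<partial>L) - (\<integral>x. Q x * h x \<partial>L)\<bar> \<le> 2 * sqrt (1 - (\<integral>x. sqrt (P x * Q x) \<partial>L)^2)"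
proof -
  define B where "B = (\<integral>x. sqrt (P x * Q x) \<partial>L)"
  have sPQ: "sqrt (P x * Q x) \<le> (P x + Q x) / 2" for x
    using Pn[of x] Qn[of x] by (metis arith_geo_mean_sqrt)
  have Bi: "integrable L (\<lambda>x. sqrt (P x * Q x))"
    by (rule Bochner_Integration.integrable_bound[where f="\<lambda>x. (P x + Q x) / 2"])
       (use Pi Qi sPQ Pn Qn in auto)
  have sq: "sqrt (P x) * sqrt (Q x) = sqrt (P x * Q x)" for x by (simp add: real_sqrt_mult)
  define a where "a x = \<bar>sqrt (P x) - sqrt (Q x)\<bar>" for x
  define b where "b x = sqrt (P x) + sqrt (Q x)" for x
  have a2: "(a x)^2 = P x + Q x - 2 * sqrt (P x * Q x)" for x
    unfolding a_def using Pn[of x] Qn[of x] sq[of x] by (simp add: power2_eq_square algebra_simps)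
  have b2: "(b x)^2 = P x + Q x + 2 * sqrt (P x * Q x)" for x
    unfolding b_def using Pn[of x] Qn[of x] sq[of x] by (simp add: power2_eq_square algebra_simps)
  have ab: "a x * b x = \<bar>P x - Q x\<bar>" for x
  proof -
    have "a x * b x = \<bar>(sqrt (P x) - sqrt (Q x)) * (sqrt (P x) + sqrt (Q x))\<bar>"
      unfolding a_def b_def using Pn[of x] Qn[of x] by (simp add: abs_mult)
    also have "(sqrt (P x) - sqrt (Q x)) * (sqrt (P x) + sqrt (Q x)) = P x - Q x"
      using Pn[of x] Qn[of x] by (simp add: algebra_simps power2_eq_square[symmetric])
    finally show ?thesis .
  qed
  have Ia: "integral\<^sup>L L (\<lambda>x. (a x)^2) = 2 - 2 * B"
    unfolding a2 B_def using Pi Qi Bi P1 Q1 by simp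
  have Ib: "integral\<^sup>L L (\<lambda>x. (b x)^2) = 2 + 2 * B"
    unfolding b2 B_def using Pi Qi Bi P1 Q1 by simp
  have ia: "integrable L (\<lambda>x. (a x)^2)" unfolding a2 using Pi Qi Bi by simp
  have ib: "integrable L (\<lambda>x. (b x)^2)" unfolding b2 using Pi Qi Bi by simp
  have iab: "integrable L (\<lambda>x. \<bar>P x - Q x\<bar>)" using Pi Qi by simp
  have B0: "0 \<le> B" unfolding B_def by (rule integral_nonneg_AE) (simp add: Pn Qn)
  define X where "X = (\<integral>x. \<bar>P x - Q x\<bar> \<partial>L)"
  have X0: "0 \<le> X" unfolding X_def by (rule integral_nonneg_AE) simp
  have amgm: "X \<le> (t * (2 - 2 * B) + (2 + 2 * B) / t) / 2" if t: "t > 0" for t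
  proof -
    have pt: "\<bar>P x - Q x\<bar> \<le> (t * (a x)^2 + (b x)^2 / t) / 2" for x
    proof -
      have "0 \<le> (t * a x - b x)^2" by simp
      then have "2 * t * (a x * b x) \<le> t * t * (a x)^2 + (b x)^2"
        by (simp add: power2_eq_square algebra_simps)
      then have "a x * b x \<le> (t * (a x)^2 + (b x)^2 / t) / 2"
        using t by (simp add: field_simps power2_eq_square)
      then show ?thesis using ab by simp
    qed
    have "X \<le> (\<integral>x. (t * (a x)^2 + (b x)^2 / t) / 2 \<partial>L)"
      unfolding X_def by (rule integral_mono) (use iab ia ib pt in auto)
    also have "\<dots> = (t * (2 - 2 * B) + (2 + 2 * B) / t) / 2"
      using ia ib Ia Ib by simp
    finally show ?thesis .
  qed
  have Ble: "B \<le> 1"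
  proof -
    have "0 \<le> integral\<^sup>L L (\<lambda>x. (a x)^2)" by (rule integral_nonneg_AE) simp
    then show ?thesis using Ia by simp
  qed
  have "X \<le> sqrt ((2 - 2 * B) * (2 + 2 * B))"
    by (rule cs_aux[OF X0 _ _ amgm]) (use B0 Ble in auto)
  also have "(2 - 2 * B) * (2 + 2 * B) = 4 * (1 - B^2)" by (simp add: algebra_simps power2_eq_square)
  also have "sqrt (4 * (1 - B^2)) = 2 * sqrt (1 - B^2)" by (subst real_sqrt_mult) simp
  finally have XB: "X \<le> 2 * sqrt (1 - B^2)" .
  have iPh: "integrable L (\<lambda>x. P x * h x)"
    by (rule Bochner_Integration.integrable_bound[where f=P]) (use Pi Pn hb in \<open>auto simp: abs_mult intro!: AE_I2 mult_left_le\<close>)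
  have iQh: "integrable L (\<lambda>x. Q x * h x)"
    by (rule Bochner_Integration.integrable_bound[where f=Q]) (use Qi Qn hb in \<open>auto simp: abs_mult intro!: AE_I2 mult_left_le\<close>)
  have "\<bar>(\<integral>x. P x * h x \<partial>L) - (\<integral>x. Q x * h x \<partial>L)\<bar> = \<bar>\<integral>x. (P x - Q x) * h x \<partial>L\<bar>"
    using iPh iQh by (simp add: left_diff_distrib)
  also have "\<dots> \<le> (\<integral>x. \<bar>(P x - Q x) * h x\<bar> \<partial>L)" by (rule integral_abs_bound)
  also have "\<dots> \<le> X"
    unfolding X_def
    by (rule integral_mono_AE) (use iab hb in \<open>auto simp: abs_mult intro!: AE_I2 mult_left_le Bochner_Integration.integrable_bound[OF iab]\<close>)
  finally show ?thesis using XB by (simp add: B_def)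
qed

lemma bc_pointwise:
  fixes \<tau> m1 m2 x :: real
  assumes t: "\<tau> > 0"
  shows "sqrt (normal_density m1 \<tau> x * normal_density m2 \<tau> x) =
         exp (-(m1 - m2)\<^sup>2 / (8 * \<tau>\<^sup>2)) * normal_density ((m1 + m2) / 2) \<tau> x"
proof -
  define k where "k = 1 / sqrt (2 * pi * \<tau>\<^sup>2)"
  have k: "k > 0" using t by (simp add: k_def)
  have ex: "-(x - m1)\<^sup>2 / (2 * \<tau>\<^sup>2) + -(x - m2)\<^sup>2 / (2 * \<tau>\<^sup>2) =
        2 * (-(m1 - m2)\<^sup>2 / (8 * \<tau>\<^sup>2) + -(x - (m1 + m2) / 2)\<^sup>2 / (2 * \<tau>\<^sup>2))"
    using t by (simp add: field_simps power2_eq_square)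
  have "normal_density m1 \<tau> x * normal_density m2 \<tau> x =
        (exp (-(m1 - m2)\<^sup>2 / (8 * \<tau>\<^sup>2)) * normal_density ((m1 + m2) / 2) \<tau> x)\<^sup>2"
  proof -
    have "normal_density m1 \<tau> x * normal_density m2 \<tau> x
        = k\<^sup>2 * exp (-(x - m1)\<^sup>2 / (2 * \<tau>\<^sup>2) + -(x - m2)\<^sup>2 / (2 * \<tau>\<^sup>2))"
      unfolding normal_density_def k_def by (simp add: exp_add[symmetric] power2_eq_square)
    also have "\<dots> = k\<^sup>2 * exp (2 * (-(m1 - m2)\<^sup>2 / (8 * \<tau>\<^sup>2) + -(x - (m1 + m2) / 2)\<^sup>2 / (2 * \<tau>\<^sup>2)))"
      by (simp only: ex)
    also have "\<dots> = (k * exp (-(m1 - m2)\<^sup>2 / (8 * \<tau>\<^sup>2) + -(x - (m1 + m2) / 2)\<^sup>2 / (2 * \<tau>\<^sup>2)))\<^sup>2"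
      by (simp add: power_mult_distrib exp_double[symmetric])
    also have "\<dots> = (exp (-(m1 - m2)\<^sup>2 / (8 * \<tau>\<^sup>2)) * normal_density ((m1 + m2) / 2) \<tau> x)\<^sup>2"
      unfolding normal_density_def k_def by (simp add: exp_diff exp_minus field_simps)
    finally show ?thesis .
  qed
  then show ?thesis using t by (simp add: normal_density_nonneg)
qed

lemma bc_integral:
  fixes \<tau> m1 m2 :: real
  assumes t: "\<tau> > 0"
  shows "integrable lborel (\<lambda>x. sqrt (normal_density m1 \<tau> x * normal_density m2 \<tau> x))"
    and "(\<integral>x. sqrt (normal_density m1 \<tau> x * normal_density m2 \<tau> x) \<partial>lborel) = exp (-(m1 - m2)\<^sup>2 / (8 * \<tau>\<^sup>2))"
  unfolding bc_pointwise[OF t] using t by simp_all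


lemma sqrt_prod_eq:
  fixes c :: "nat \<Rightarrow> real"
  shows "finite I \<Longrightarrow> (\<And>i. 0 \<le> c i) \<Longrightarrow> sqrt (\<Prod>i\<in>I. c i) = (\<Prod>i\<in>I. sqrt (c i))"
  by (induction I rule: finite_induct) (auto simp: real_sqrt_mult)

lemma tv_obs_bound:
  fixes \<tau> :: real and F G :: "nat \<Rightarrow> real" and n :: nat
  assumes t: "\<tau> > 0"
  shows "tv_norm (PiM {..n} (\<lambda>i. density lborel (normal_density (F i) \<tau>)))
                 (PiM {..n} (\<lambda>i. density lborel (normal_density (G i) \<tau>)))
         \<le> 2 * sqrt (1 - exp (- (\<Sum>i\<le>n. (F i - G i)\<^sup>2) / (4 * \<tau>\<^sup>2)))"
proof -
  let ?L = "PiM {..n} (\<lambda>_. lborel :: real measure)"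
  define P where "P x = (\<Prod>i\<le>n. normal_density (F i) \<tau> (x i))" for x :: "nat \<Rightarrow> real"
  define Q where "Q x = (\<Prod>i\<le>n. normal_density (G i) \<tau> (x i))" for x :: "nat \<Rightarrow> real"
  define M where "M = PiM {..n} (\<lambda>i. density lborel (normal_density (F i) \<tau>))"
  define N where "N = PiM {..n} (\<lambda>i. density lborel (normal_density (G i) \<tau>))"
  interpret L: product_sigma_finite "\<lambda>_. lborel :: real measure"
    unfolding product_sigma_finite_def by (simp add: lborel.sigma_finite_measure_axioms)
  have MD: "M = density ?L (\<lambda>x. ennreal (P x))"
    unfolding M_def P_def
    by (rule PiM_density_eq) (auto intro: prob_space_normal_density t)
  have ND: "N = density ?L (\<lambda>x. ennreal (Q x))"
    unfolding N_def Q_def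
    by (rule PiM_density_eq) (auto intro: prob_space_normal_density t)
  have Pm[measurable]: "P \<in> borel_measurable ?L" unfolding P_def by measurable
  have Qm[measurable]: "Q \<in> borel_measurable ?L" unfolding Q_def by measurable
  have Pn: "0 \<le> P x" for x unfolding P_def by (simp add: prod_nonneg)
  have Qn: "0 \<le> Q x" for x unfolding Q_def by (simp add: prod_nonneg)
  have Pi: "integrable ?L P" unfolding P_def
    by (rule L.product_integrable_prod) (auto intro: integrable_normal_density t)
  have Qi: "integrable ?L Q" unfolding Q_def
    by (rule L.product_integrable_prod) (auto intro: integrable_normal_density t)
  have P1: "integral\<^sup>L ?L P = 1" unfolding P_def
    by (subst L.product_integral_prod) (auto simp: t intro: integrable_normal_density t)
  have Q1: "integral\<^sup>L ?L Q = 1" unfolding Q_def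
    by (subst L.product_integral_prod) (auto simp: t intro: integrable_normal_density t)
  define S where "S = (\<Sum>i\<le>n. (F i - G i)\<^sup>2)"
  have sPQ: "sqrt (P x * Q x) = (\<Prod>i\<le>n. sqrt (normal_density (F i) \<tau> (x i) * normal_density (G i) \<tau> (x i)))" for x
    unfolding P_def Q_def prod.distrib[symmetric] by (rule sqrt_prod_eq) (auto simp: normal_density_nonneg)
  have "(\<integral>x. sqrt (P x * Q x) \<partial>?L) = (\<Prod>i\<le>n. exp (-(F i - G i)\<^sup>2 / (8 * \<tau>\<^sup>2)))"
    unfolding sPQ
    by (subst L.product_integral_prod) (auto intro: bc_integral[OF t] intro!: prod.cong simp: bc_integral(2)[OF t])
  also have "\<dots> = exp (\<Sum>i\<le>n. -(F i - G i)\<^sup>2 / (8 * \<tau>\<^sup>2))" by (simp add: exp_sum)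
  also have "\<dots> = exp (- S / (8 * \<tau>\<^sup>2))" unfolding S_def by (simp add: sum_divide_distrib sum_negf)
  finally have BC: "(\<integral>x. sqrt (P x * Q x) \<partial>?L) = exp (- S / (8 * \<tau>\<^sup>2))" .
  have BC2: "(exp (- S / (8 * \<tau>\<^sup>2)))\<^sup>2 = exp (- S / (4 * \<tau>\<^sup>2))"
    by (simp add: exp_double[symmetric])
  have sM: "sets M = sets ?L" unfolding MD by simp
  have spM: "space M = space ?L" unfolding MD by simp
  have "tv_norm M N \<le> 2 * sqrt (1 - exp (- S / (4 * \<tau>\<^sup>2)))"
    unfolding tv_norm_def
  proof (rule cSUP_least)
    show "{h::(nat \<Rightarrow> real) \<Rightarrow> real. h \<in> borel_measurable M \<and> (\<forall>x\<in>space M. \<bar>h x\<bar> \<le> 1)} \<noteq> {}"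
    proof -
      have "(\<lambda>_. 0::real) \<in> {h. h \<in> borel_measurable M \<and> (\<forall>x\<in>space M. \<bar>h x\<bar> \<le> 1)}" by simp
      then show ?thesis by (intro notI) (erule equals0D[THEN notE], assumption)
    qed
  next
    fix h :: "(nat \<Rightarrow> real) \<Rightarrow> real" assume h: "h \<in> {h. h \<in> borel_measurable M \<and> (\<forall>x\<in>space M. \<bar>h x\<bar> \<le> 1)}"
    then have hm0: "h \<in> borel_measurable M" by simp
    then have hm: "h \<in> borel_measurable ?L" unfolding measurable_cong_sets[OF sM refl, of borel] .
    have hb: "\<And>x. x \<in> space ?L \<Longrightarrow> \<bar>h x\<bar> \<le> 1" using h spM by auto
    have "integral\<^sup>L M h = (\<integral>x. P x * h x \<partial>?L)"
      unfolding MD by (subst integral_density) (use hm Pn in auto)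
    moreover have "integral\<^sup>L N h = (\<integral>x. Q x * h x \<partial>?L)"
      unfolding ND by (subst integral_density) (use hm Qn in auto)
    ultimately show "\<bar>integral\<^sup>L M h - integral\<^sup>L N h\<bar> \<le> 2 * sqrt (1 - exp (- S / (4 * \<tau>\<^sup>2)))"
      using tv_bound_abstract[OF Pm Qm Pn Qn Pi Qi P1 Q1 hm hb] BC BC2 by simp
  qed
  then show ?thesis unfolding M_def N_def S_def .
qed

lemma sq_sum_le:
  fixes a b :: real
  shows "(a + b)\<^sup>2 \<le> 2 * a\<^sup>2 + 2 * b\<^sup>2"
proof -
  have "0 \<le> (a - b)\<^sup>2" by simp
  then show ?thesis by (simp add: power2_eq_square algebra_simps)
qed

lemma grid_cell:
  fixes h :: "real \<Rightarrow> real" and K \<alpha> :: real and n k :: nat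
  assumes n: "n \<ge> 1" and k: "k + 1 \<le> n" and hc: "continuous_on {0..1} h" and K: "K \<ge> 0" and a: "0 \<le> \<alpha>"
    and hol: "\<And>s t. s \<in> {0..1} \<Longrightarrow> t \<in> {0..1} \<Longrightarrow> \<bar>h s - h t\<bar> \<le> K * \<bar>s - t\<bar> powr \<alpha>"
  shows "(h (real (k+1) / real n))\<^sup>2 \<le> 2 * real n * integral {real k / real n .. real (k+1) / real n} (\<lambda>t. (h t)\<^sup>2)
           + 2 * real n powr (-2*\<alpha>) * K\<^sup>2"
proof -
  define a0 where "a0 = real k / real n"
  define b0 where "b0 = real (k+1) / real n"
  define d where "d = K * real n powr (-\<alpha>)"
  have npos: "real n > 0" using n by simp
  have ab: "b0 - a0 = 1 / real n" unfolding a0_def b0_def using npos by (simp add: field_simps)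
  have a00: "0 \<le> a0" unfolding a0_def by simp
  have b01: "b0 \<le> 1" unfolding b0_def using k npos by (simp add: field_simps)
  have ab0: "a0 \<le> b0" unfolding a0_def b0_def using npos by (simp add: divide_right_mono)
  have d2: "d\<^sup>2 = real n powr (-2*\<alpha>) * K\<^sup>2"
    unfolding d_def by (simp add: power_mult_distrib power2_eq_square powr_add[symmetric])
  have pt: "(h b0)\<^sup>2 \<le> 2 * (h t)\<^sup>2 + 2 * d\<^sup>2" if t: "t \<in> {a0..b0}" for t
  proof -
    have t01: "t \<in> {0..1}" using t a00 b01 by auto
    have b0i: "b0 \<in> {0..1}" using a00 ab0 b01 by auto
    have "\<bar>b0 - t\<bar> \<le> 1 / real n" using t ab by auto
    then have "\<bar>b0 - t\<bar> powr \<alpha> \<le> (1 / real n) powr \<alpha>" using a by (intro powr_mono2) auto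
    also have "(1 / real n) powr \<alpha> = real n powr (-\<alpha>)" using npos by (simp add: powr_minus_divide powr_divide)
    finally have "K * \<bar>b0 - t\<bar> powr \<alpha> \<le> d" unfolding d_def using K by (intro mult_left_mono) auto
    then have "\<bar>h b0 - h t\<bar> \<le> d" using hol[OF b0i t01] by linarith
    then have "\<bar>h b0\<bar> \<le> \<bar>h t\<bar> + d" by linarith
    moreover have "0 \<le> \<bar>h b0\<bar>" by simp
    ultimately have "\<bar>h b0\<bar>\<^sup>2 \<le> (\<bar>h t\<bar> + d)\<^sup>2" by (intro power_mono) auto
    also have "\<dots> \<le> 2 * \<bar>h t\<bar>\<^sup>2 + 2 * d\<^sup>2" by (rule sq_sum_le)
    also have "\<bar>h t\<bar>\<^sup>2 = (h t)\<^sup>2" by simp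
    finally show ?thesis by simp
  qed
  have ci: "continuous_on {a0..b0} (\<lambda>t. (h t)\<^sup>2)"
    by (rule continuous_on_subset[of "{0..1}"]) (use hc a00 b01 in \<open>auto intro!: continuous_intros\<close>)
  have ii: "(\<lambda>t. (h t)\<^sup>2) integrable_on {a0..b0}" by (rule integrable_continuous_interval[OF ci])
  have ch: "continuous_on {a0..b0} h"
    by (rule continuous_on_subset[of "{0..1}"]) (use hc a00 b01 in auto)
  have ii2: "(\<lambda>t. 2 * (h t)\<^sup>2 + 2 * d\<^sup>2) integrable_on {a0..b0}"
    by (intro integrable_continuous_interval continuous_intros ch)
  have "(b0 - a0) * (h b0)\<^sup>2 = integral {a0..b0} (\<lambda>t. (h b0)\<^sup>2)" using ab0 by simp
  also have "\<dots> \<le> integral {a0..b0} (\<lambda>t. 2 * (h t)\<^sup>2 + 2 * d\<^sup>2)"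
    by (rule integral_le) (use ii ii2 pt in auto)
  also have "\<dots> = 2 * integral {a0..b0} (\<lambda>t. (h t)\<^sup>2) + (b0 - a0) * (2 * d\<^sup>2)"
  proof -
    have "integral {a0..b0} (\<lambda>t. 2 * (h t)\<^sup>2 + 2 * d\<^sup>2) = integral {a0..b0} (\<lambda>t. 2 * (h t)\<^sup>2) + integral {a0..b0} (\<lambda>t. 2 * d\<^sup>2)"
      by (rule integral_add) (intro integrable_continuous_interval continuous_intros ch)+
    also have "integral {a0..b0} (\<lambda>t. 2 * (h t)\<^sup>2) = 2 * integral {a0..b0} (\<lambda>t. (h t)\<^sup>2)"
      using integral_cmul[of "{a0..b0}" 2 "\<lambda>t. (h t)\<^sup>2"] by simp
    also have "integral {a0..b0} (\<lambda>t. 2 * d\<^sup>2) = (b0 - a0) * (2 * d\<^sup>2)" using ab0 by simp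
    finally show ?thesis .
  qed
  finally have "(1 / real n) * (h b0)\<^sup>2 \<le> 2 * integral {a0..b0} (\<lambda>t. (h t)\<^sup>2) + (1 / real n) * (2 * d\<^sup>2)"
    unfolding ab .
  then have "real n * ((1 / real n) * (h b0)\<^sup>2) \<le> real n * (2 * integral {a0..b0} (\<lambda>t. (h t)\<^sup>2) + (1 / real n) * (2 * d\<^sup>2))"
    using npos by (intro mult_left_mono) auto
  then have "(h b0)\<^sup>2 \<le> real n * (2 * integral {a0..b0} (\<lambda>t. (h t)\<^sup>2) + (1 / real n) * (2 * d\<^sup>2))"
    using npos by simp
  also have "\<dots> = 2 * real n * integral {a0..b0} (\<lambda>t. (h t)\<^sup>2) + 2 * d\<^sup>2"
    using npos by (simp add: distrib_left)
  finally show ?thesis unfolding d2 a0_def b0_def by simp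
qed

lemma grid_sum_bound:
  fixes h :: "real \<Rightarrow> real" and K \<alpha> :: real and n :: nat
  assumes n: "n \<ge> 1" and hc: "continuous_on {0..1} h" and h0: "h 0 = 0" and K: "K \<ge> 0" and a: "0 \<le> \<alpha>"
    and hol: "\<And>s t. s \<in> {0..1} \<Longrightarrow> t \<in> {0..1} \<Longrightarrow> \<bar>h s - h t\<bar> \<le> K * \<bar>s - t\<bar> powr \<alpha>"
  shows "(\<Sum>i\<le>n. (h (real i / real n))\<^sup>2) \<le> 2 * real n * integral {0..1} (\<lambda>t. (h t)\<^sup>2) + 2 * real n powr (1 - 2*\<alpha>) * K\<^sup>2"
proof -
  have npos: "real n > 0" using n by simp
  have ind: "k \<le> n \<Longrightarrow> (\<Sum>i\<le>k. (h (real i / real n))\<^sup>2) \<le> 2 * real n * integral {0..real k / real n} (\<lambda>t. (h t)\<^sup>2) + 2 * real k * real n powr (-2*\<alpha>) * K\<^sup>2" for k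
  proof (induction k)
    case 0
    then show ?case using h0 by simp
  next
    case (Suc k)
    have ci: "continuous_on {0..real (Suc k) / real n} (\<lambda>t. (h t)\<^sup>2)"
      by (rule continuous_on_subset[of "{0..1}"]) (use hc Suc.prems npos in \<open>auto intro!: continuous_intros simp: field_simps\<close>)
    have comb: "integral {0..real k / real n} (\<lambda>t. (h t)\<^sup>2) + integral {real k / real n..real (Suc k) / real n} (\<lambda>t. (h t)\<^sup>2)
        = integral {0..real (Suc k) / real n} (\<lambda>t. (h t)\<^sup>2)"
      by (rule Henstock_Kurzweil_Integration.integral_combine) (use npos integrable_continuous_interval[OF ci] in \<open>auto simp: field_simps\<close>)
    have cell: "(h (real (k+1) / real n))\<^sup>2 \<le> 2 * real n * integral {real k / real n .. real (k+1) / real n} (\<lambda>t. (h t)\<^sup>2)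
           + 2 * real n powr (-2*\<alpha>) * K\<^sup>2"
      by (rule grid_cell[OF n _ hc K a hol]) (use Suc.prems in auto)
    have "(\<Sum>i\<le>Suc k. (h (real i / real n))\<^sup>2) = (\<Sum>i\<le>k. (h (real i / real n))\<^sup>2) + (h (real (k+1) / real n))\<^sup>2"
      by simp
    also have "\<dots> \<le> (2 * real n * integral {0..real k / real n} (\<lambda>t. (h t)\<^sup>2) + 2 * real k * real n powr (-2*\<alpha>) * K\<^sup>2)
        + (2 * real n * integral {real k / real n .. real (k+1) / real n} (\<lambda>t. (h t)\<^sup>2) + 2 * real n powr (-2*\<alpha>) * K\<^sup>2)"
      using Suc cell by simp
    also have "\<dots> = 2 * real n * integral {0..real (Suc k) / real n} (\<lambda>t. (h t)\<^sup>2) + 2 * real (Suc k) * real n powr (-2*\<alpha>) * K\<^sup>2"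
      using comb[symmetric] by (simp add: algebra_simps)
    finally show ?case .
  qed
  have "(\<Sum>i\<le>n. (h (real i / real n))\<^sup>2) \<le> 2 * real n * integral {0..real n / real n} (\<lambda>t. (h t)\<^sup>2) + 2 * real n * real n powr (-2*\<alpha>) * K\<^sup>2"
    by (rule ind) simp
  also have "real n / real n = 1" using npos by simp
  also have "2 * real n * real n powr (-2*\<alpha>) * K\<^sup>2 = 2 * real n powr (1 - 2*\<alpha>) * K\<^sup>2"
  proof -
    have "real n powr (1 - 2*\<alpha>) = real n powr 1 * real n powr (-2*\<alpha>)"
      by (subst powr_add[symmetric]) simp
    also have "real n powr 1 = real n" using npos by simp
    finally show ?thesis by simp
  qed
  finally show ?thesis .
qed


lemma sup_norm_bound:
  assumes hc: "continuous_on {0..1} h" and t: "t \<in> {0..1}"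
  shows "\<bar>h t\<bar> \<le> sup_norm h"
proof -
  have "compact ((\<lambda>t. \<bar>h t\<bar>) ` {0..1::real})"
    by (intro compact_continuous_image continuous_intros hc) simp
  then have "bdd_above ((\<lambda>t. \<bar>h t\<bar>) ` {0..1::real})"
    by (intro bounded_imp_bdd_above compact_imp_bounded)
  then show ?thesis unfolding sup_norm_def by (intro cSUP_upper t)
qed

lemma holder_quot_bdd_diff:
  assumes "f \<in> holder_space \<alpha>" "g \<in> holder_space \<alpha>"
  shows "bdd_above (holder_quot \<alpha> (\<lambda>t. f t - g t))"
proof -
  have bf: "bdd_above (holder_quot \<alpha> f)" and bg: "bdd_above (holder_quot \<alpha> g)"
    using assms unfolding holder_space_def by auto
  show ?thesis unfolding bdd_above_def
  proof (intro exI ballI)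
    fix q assume "q \<in> holder_quot \<alpha> (\<lambda>t. f t - g t)"
    then obtain s t where st: "s \<in> {0..1}" "t \<in> {0..1}" "s \<noteq> t"
      and q: "q = \<bar>(f s - g s) - (f t - g t)\<bar> / \<bar>s - t\<bar> powr \<alpha>"
      unfolding holder_quot_def by blast
    have p: "\<bar>s - t\<bar> powr \<alpha> > 0" using st by simp
    have qf: "\<bar>f s - f t\<bar> / \<bar>s - t\<bar> powr \<alpha> \<in> holder_quot \<alpha> f"
      unfolding holder_quot_def using st by blast
    have qg: "\<bar>g s - g t\<bar> / \<bar>s - t\<bar> powr \<alpha> \<in> holder_quot \<alpha> g"
      unfolding holder_quot_def using st by blast
    have "q \<le> \<bar>f s - f t\<bar> / \<bar>s - t\<bar> powr \<alpha> + \<bar>g s - g t\<bar> / \<bar>s - t\<bar> powr \<alpha>"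
      unfolding q add_divide_distrib[symmetric] using p by (intro divide_right_mono) auto
    also have "\<dots> \<le> Sup (holder_quot \<alpha> f) + Sup (holder_quot \<alpha> g)"
      by (intro add_mono cSup_upper qf qg bf bg)
    finally show "q \<le> Sup (holder_quot \<alpha> f) + Sup (holder_quot \<alpha> g)" .
  qed
qed

lemma holder_bound:
  assumes bdd: "bdd_above (holder_quot \<alpha> h)" and s: "s \<in> {0..1}" and t: "t \<in> {0..1}"
  shows "\<bar>h s - h t\<bar> \<le> Sup (holder_quot \<alpha> h) * \<bar>s - t\<bar> powr \<alpha>"
    and "0 \<le> Sup (holder_quot \<alpha> h)"
proof -
  have q01: "\<bar>h 0 - h 1\<bar> / \<bar>0 - 1\<bar> powr \<alpha> \<in> holder_quot \<alpha> h"
    unfolding holder_quot_def by (rule CollectI, rule exI[of _ "0::real"], rule exI[of _ "1::real"]) simp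
  have "0 \<le> \<bar>h 0 - h 1\<bar> / \<bar>0 - 1\<bar> powr \<alpha>" by simp
  also have "\<dots> \<le> Sup (holder_quot \<alpha> h)" by (intro cSup_upper q01 bdd)
  finally show Hq0: "0 \<le> Sup (holder_quot \<alpha> h)" .
  show "\<bar>h s - h t\<bar> \<le> Sup (holder_quot \<alpha> h) * \<bar>s - t\<bar> powr \<alpha>"
  proof (cases "s = t")
    case True then show ?thesis by simp
  next
    case False
    have p: "\<bar>s - t\<bar> powr \<alpha> > 0" using False by simp
    have "\<bar>h s - h t\<bar> / \<bar>s - t\<bar> powr \<alpha> \<in> holder_quot \<alpha> h"
      unfolding holder_quot_def using s t False by blast
    then have "\<bar>h s - h t\<bar> / \<bar>s - t\<bar> powr \<alpha> \<le> Sup (holder_quot \<alpha> h)" by (intro cSup_upper bdd)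
    then show ?thesis using p by (simp add: divide_le_eq)
  qed
qed

theorem lemma7p1:
  fixes \<tau> \<alpha> :: real
  assumes "\<tau> > 0" and "0 \<le> \<alpha>" and "\<alpha> < 1"
  shows "\<exists>c > 0. \<exists>R :: real \<Rightarrow> real.
           (\<forall>x \<ge> 0. R x > 0) \<and> (\<forall>x y. 0 \<le> x \<longrightarrow> x \<le> y \<longrightarrow> R y \<le> R x) \<and>
           (\<forall>(n::nat) f g. n \<ge> 1 \<longrightarrow> f \<in> holder_space \<alpha> \<longrightarrow> g \<in> holder_space \<alpha> \<longrightarrow>
              f 0 = 0 \<longrightarrow> g 0 = 0 \<longrightarrow>
              tv_norm (obs_law \<tau> n f) (obs_law \<tau> n g) \<le> c * sqrt (real n) * sup_norm (\<lambda>t. f t - g t) \<and>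
              1 - tv_norm (obs_law \<tau> n f) (obs_law \<tau> n g) / 2 \<ge>
                R (real n * (L2_norm01 (\<lambda>t. f t - g t))^2
                   + real n powr (1 - \<alpha>) * (holder_norm \<alpha> (\<lambda>t. f t - g t))^2))"
proof -
  have t: "\<tau> > 0" and a: "0 \<le> \<alpha>" using assms by auto
  define R where "R x = exp (- x / (2 * \<tau>\<^sup>2)) / 2" for x :: real
  have c: "sqrt 2 / \<tau> > 0" using t by simp
  have Rpos: "\<forall>x \<ge> 0. R x > 0" unfolding R_def by simp
  have Rmono: "\<forall>x y. 0 \<le> x \<longrightarrow> x \<le> y \<longrightarrow> R y \<le> R x"
    unfolding R_def using t by (auto simp: divide_right_mono)
  have main: "tv_norm (obs_law \<tau> n f) (obs_law \<tau> n g) \<le> sqrt 2 / \<tau> * sqrt (real n) * sup_norm (\<lambda>t. f t - g t) \<and>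
              1 - tv_norm (obs_law \<tau> n f) (obs_law \<tau> n g) / 2 \<ge>
                R (real n * (L2_norm01 (\<lambda>t. f t - g t))^2
                   + real n powr (1 - \<alpha>) * (holder_norm \<alpha> (\<lambda>t. f t - g t))^2)"
    if n: "n \<ge> 1" and f: "f \<in> holder_space \<alpha>" and g: "g \<in> holder_space \<alpha>" and f0: "f 0 = 0" and g0: "g 0 = 0"
    for n :: nat and f g
  proof -
    define h where "h t = f t - g t" for t
    have hfun: "(\<lambda>t. f t - g t) = h" unfolding h_def by simp
    have npos: "real n > 0" using n by simp
    have hc: "continuous_on {0..1} h"
      unfolding h_def using f g unfolding holder_space_def by (auto intro!: continuous_intros)
    have h0: "h 0 = 0" unfolding h_def using f0 g0 by simp
    have bdd: "bdd_above (holder_quot \<alpha> h)" unfolding h_def[abs_def] by (rule holder_quot_bdd_diff[OF f g])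
    define Hq where "Hq = Sup (holder_quot \<alpha> h)"
    have Hq0: "0 \<le> Hq" unfolding Hq_def using holder_bound(2)[OF bdd, of 0 0] by simp
    have hol: "\<And>s t. s \<in> {0..1} \<Longrightarrow> t \<in> {0..1} \<Longrightarrow> \<bar>h s - h t\<bar> \<le> Hq * \<bar>s - t\<bar> powr \<alpha>"
      unfolding Hq_def by (rule holder_bound(1)[OF bdd])
    define sn where "sn = sup_norm h"
    have snb: "\<And>t. t \<in> {0..1} \<Longrightarrow> \<bar>h t\<bar> \<le> sn" unfolding sn_def by (rule sup_norm_bound[OF hc])
    have sn0: "0 \<le> sn" using snb[of 0] by simp
    define H where "H = holder_norm \<alpha> h"
    have H: "H = sn + Hq" unfolding H_def holder_norm_def sn_def Hq_def ..
    define S where "S = (\<Sum>i\<le>n. (f (real i / real n) - g (real i / real n))\<^sup>2)"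
    have S': "S = (\<Sum>i\<le>n. (h (real i / real n))\<^sup>2)" unfolding S_def h_def ..
    have S0: "0 \<le> S" unfolding S_def by (intro sum_nonneg) simp
    define T where "T = tv_norm (obs_law \<tau> n f) (obs_law \<tau> n g)"
    have TB: "T \<le> 2 * sqrt (1 - exp (- S / (4 * \<tau>\<^sup>2)))"
      unfolding T_def S_def obs_law_def
      using tv_obs_bound[OF t, where F="\<lambda>i. f (real i / real n)" and G="\<lambda>i. g (real i / real n)" and n=n] by simp
    define E where "E = exp (- S / (4 * \<tau>\<^sup>2))"
    have E1: "E \<le> 1" unfolding E_def using S0 t by simp
    have E0: "0 < E" unfolding E_def by simp
    have Ssn: "S \<le> 2 * real n * sn\<^sup>2"
    proof -
      have "S \<le> real (card {..n}) * sn\<^sup>2"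
        unfolding S' 
      proof (rule sum_bounded_above)
        fix i assume i: "i \<in> {..n}"
        have "real i / real n \<in> {0..1}" using i npos by (auto simp: field_simps)
        then have "\<bar>h (real i / real n)\<bar> \<le> sn" by (rule snb)
        then have "\<bar>h (real i / real n)\<bar>\<^sup>2 \<le> sn\<^sup>2" by (intro power_mono) auto
        then show "(h (real i / real n))\<^sup>2 \<le> sn\<^sup>2" by simp
      qed
      also have "\<dots> \<le> 2 * real n * sn\<^sup>2" using n by (intro mult_right_mono) auto
      finally show ?thesis .
    qed
    have "T \<le> 2 * sqrt (S / (4 * \<tau>\<^sup>2))"
    proof -
      have "1 - E \<le> S / (4 * \<tau>\<^sup>2)"
        unfolding E_def using exp_ge_add_one_self[of "- S / (4 * \<tau>\<^sup>2)"] by simp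
      then show ?thesis using TB unfolding E_def[symmetric] by (smt (verit) real_sqrt_le_mono)
    qed
    also have "\<dots> \<le> 2 * sqrt (2 * real n * sn\<^sup>2 / (4 * \<tau>\<^sup>2))"
      using Ssn t by (intro mult_left_mono real_sqrt_le_mono divide_right_mono) auto
    also have "2 * real n * sn\<^sup>2 / (4 * \<tau>\<^sup>2) = (sqrt 2 * sqrt (real n) * sn / (2 * \<tau>))\<^sup>2"
      using t by (simp add: power_mult_distrib power_divide)
    also have "2 * sqrt \<dots> = sqrt 2 / \<tau> * sqrt (real n) * sn"
      using t sn0 by simp
    finally have I1: "T \<le> sqrt 2 / \<tau> * sqrt (real n) * sn" .
    define x where "x = real n * (L2_norm01 h)\<^sup>2 + real n powr (1 - \<alpha>) * H\<^sup>2"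
    have hi: "(\<lambda>t. (h t)\<^sup>2) integrable_on {0..1}"
      by (intro integrable_continuous_interval continuous_intros hc)
    have I0: "0 \<le> integral {0..1} (\<lambda>t. (h t)\<^sup>2)"
      by (rule integral_nonneg[OF hi]) simp
    have L2: "(L2_norm01 h)\<^sup>2 = integral {0..1} (\<lambda>t. (h t)\<^sup>2)"
      unfolding L2_norm01_def using I0 by simp
    have "S \<le> 2 * real n * integral {0..1} (\<lambda>t. (h t)\<^sup>2) + 2 * real n powr (1 - 2*\<alpha>) * Hq\<^sup>2"
      unfolding S' by (rule grid_sum_bound[OF n hc h0 Hq0 a hol])
    also have "\<dots> \<le> 2 * real n * integral {0..1} (\<lambda>t. (h t)\<^sup>2) + 2 * real n powr (1 - \<alpha>) * H\<^sup>2"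
    proof -
      have "real n powr (1 - 2*\<alpha>) \<le> real n powr (1 - \<alpha>)" using n a by (intro powr_mono) auto
      moreover have "Hq\<^sup>2 \<le> H\<^sup>2" using H Hq0 sn0 by (intro power_mono) auto
      ultimately have "real n powr (1 - 2*\<alpha>) * Hq\<^sup>2 \<le> real n powr (1 - \<alpha>) * H\<^sup>2"
        by (intro mult_mono) auto
      then show ?thesis by simp
    qed
    also have "\<dots> = 2 * x" unfolding x_def L2 by (simp add: algebra_simps)
    finally have Sx: "S \<le> 2 * x" .
    have "S / (4 * \<tau>\<^sup>2) \<le> (2 * x) / (4 * \<tau>\<^sup>2)" by (rule divide_right_mono[OF Sx]) simp
    also have "(2 * x) / (4 * \<tau>\<^sup>2) = x / (2 * \<tau>\<^sup>2)" by simp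
    finally have Sx2: "S / (4 * \<tau>\<^sup>2) \<le> x / (2 * \<tau>\<^sup>2)" .
    have "R x \<le> E / 2"
      unfolding R_def E_def using Sx2 by simp
    also have "E / 2 \<le> 1 - sqrt (1 - E)"
    proof -
      have "sqrt (1 - E) \<le> sqrt ((1 - E / 2)\<^sup>2)"
        by (rule real_sqrt_le_mono) (simp add: power2_eq_square algebra_simps)
      also have "\<dots> = 1 - E / 2" using E1 by simp
      finally show ?thesis by simp
    qed
    also have "\<dots> \<le> 1 - T / 2" using TB unfolding E_def by simp
    finally have I2: "R x \<le> 1 - T / 2" .
    show ?thesis using I1 I2 unfolding T_def x_def H_def sn_def hfun by simp
  qed
  show ?thesis
    by (intro exI[of _ "sqrt 2 / \<tau>"] conjI c exI[of _ R] Rpos Rmono allI impI main)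
qed

end
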